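(* Assume $\mathrm{char}(\mathbb{F})=p>0$ and $\deg h\ge1$, regard $A_h\subseteq A_1$ via $x\mapsto x$, $\hat y\mapsto yh$, and let $c\in C_{A_h}(x)=\mathbb{F}[x,h^py^p]$. Then there is an injective $\mathbb{F}$-algebra homomorphism $\kappa_c:A_h\to A_h$ with $\kappa_c(\hat y)=\hat y+c$ and $\kappa_c(r)=r$ for all $r\in\mathbb{F}[x]$. If $c\notin\mathbb{F}[x]$, then $\kappa_c$ is not an automorphism of $A_h$.
   Context: For $h\in\mathbb{F}[x]$, $A_h$ is the unital associative $\mathbb{F}$-algebra generated by $x,\hat y$ with defining relation $\hat yx-x\hat y=h$. $A_1$ is the Weyl algebra, generated by $x,y$ with $yx-xy=1$; for $h\ne0$, $x\mapsto x,\hat y\mapsto yh$ embeds $A_h$ into $A_1$, and $h^py^p\in A_h$. $C_{A_h}(x)=\{a\in A_h: ax=xa\}$. *)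

theory Defs
  imports "HOL-Computational_Algebra.Polynomial"
begin

text \<open>Concrete model of the Weyl algebra A_1 over a field: an element is written
  uniquely in normal form  sum_j q_j(x) y^j  (coefficients in F[x] on the left),
  represented as a polynomial in y with coefficients in F[x], i.e. type 'a poly poly.
  The product uses  y^j r = sum_l (j choose l) r^(l) y^(j-l)  for r in F[x]
  (this encodes yx - xy = 1).\<close>

definition weyl_mult :: "'a::field poly poly \<Rightarrow> 'a poly poly \<Rightarrow> 'a poly poly" where
  "weyl_mult P Q =
     (\<Sum>j\<le>degree P. \<Sum>k\<le>degree Q. \<Sum>l\<le>j.
        monom (coeff P j * smult (of_nat (j choose l)) ((pderiv ^^ l) (coeff Q k))) (j - l + k))"

definition weyl_x :: "'a::field poly poly" where
  "weyl_x = [: [:0, 1:] :]"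

definition weyl_y :: "'a::field poly poly" where
  "weyl_y = [: 0, 1 :]"

definition weyl_polys :: "'a::field poly poly set" where
  "weyl_polys = {[: r :] | r. True}"

definition weyl_yhat :: "'a::field poly \<Rightarrow> 'a poly poly" where
  "weyl_yhat h = weyl_mult weyl_y [: h :]"

inductive_set A_h :: "'a::field poly \<Rightarrow> 'a poly poly set" for h where
  const: "[: [: a :] :] \<in> A_h h"
| gen_x: "weyl_x \<in> A_h h"
| gen_yhat: "weyl_yhat h \<in> A_h h"
| add: "a \<in> A_h h \<Longrightarrow> b \<in> A_h h \<Longrightarrow> a + b \<in> A_h h"
| mult: "a \<in> A_h h \<Longrightarrow> b \<in> A_h h \<Longrightarrow> weyl_mult a b \<in> A_h h"

definition centralizer_x :: "'a::field poly \<Rightarrow> 'a poly poly set" where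
  "centralizer_x h = {a \<in> A_h h. weyl_mult a weyl_x = weyl_mult weyl_x a}"

definition is_alg_endo :: "'a::field poly \<Rightarrow> ('a poly poly \<Rightarrow> 'a poly poly) \<Rightarrow> bool" where
  "is_alg_endo h \<kappa> \<longleftrightarrow>
     (\<forall>a\<in>A_h h. \<kappa> a \<in> A_h h) \<and>
     \<kappa> 1 = 1 \<and>
     (\<forall>a\<in>A_h h. \<forall>b\<in>A_h h. \<kappa> (a + b) = \<kappa> a + \<kappa> b) \<and>
     (\<forall>s. \<forall>a\<in>A_h h. \<kappa> (smult [: s :] a) = smult [: s :] (\<kappa> a)) \<and>
     (\<forall>a\<in>A_h h. \<forall>b\<in>A_h h. \<kappa> (weyl_mult a b) = weyl_mult (\<kappa> a) (\<kappa> b))"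

end

theory Submission
  imports Defs
begin


definition Dop :: "'a::field poly poly \<Rightarrow> 'a poly poly" where
  "Dop f = map_poly pderiv f + pCons 0 f"

lemma coeff_Dop: "coeff (Dop f) i = pderiv (coeff f i) + (if i = 0 then 0 else coeff f (i - 1))"
  by (simp add: Dop_def coeff_map_poly coeff_pCons split: nat.split)

lemma Dop_add: "Dop (f + g) = Dop f + Dop g"
  by (simp add: poly_eq_iff coeff_Dop pderiv_add)

lemma Dop_0[simp]: "Dop 0 = 0"
  by (simp add: poly_eq_iff coeff_Dop)

lemma Dop_smult: "Dop (smult s f) = smult (pderiv s) f + smult s (Dop f)"
  by (simp add: poly_eq_iff coeff_Dop pderiv_mult algebra_simps)

lemma Dop_sum: "Dop (\<Sum>i\<in>A. f i) = (\<Sum>i\<in>A. Dop (f i))"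
  by (induction A rule: infinite_finite_induct) (auto simp: Dop_add)

lemma Dop_of_nat_mult: "Dop (of_nat n * x) = of_nat n * Dop x"
  by (induction n) (auto simp: Dop_add algebra_simps)

lemma funpow_Dop_add: "(Dop^^j) (f + g) = (Dop^^j) f + (Dop^^j) g"
  by (induction j) (auto simp: Dop_add)

lemma funpow_Dop_0[simp]: "(Dop^^j) 0 = 0"
  by (induction j) auto

lemma funpow_Dop_sum: "(Dop^^j) (\<Sum>i\<in>A. f i) = (\<Sum>i\<in>A. (Dop^^j) (f i))"
  by (induction A rule: infinite_finite_induct) (auto simp: funpow_Dop_add)

lemma leibniz_abstract:
  fixes D :: "'b::comm_ring_1 \<Rightarrow> 'b" and T :: "nat \<Rightarrow> nat \<Rightarrow> 'b"
  assumes add: "\<And>x y. D (x + y) = D x + D y"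
    and nat: "\<And>n x. D (of_nat n * x) = of_nat n * D x"
    and T: "\<And>l m. D (T l m) = T (Suc l) m + T l (Suc m)"
  shows "(D^^j) (T 0 0) = (\<Sum>l\<le>j. of_nat (j choose l) * T l (j - l))"
proof (induction j)
  case 0 then show ?case by simp
next
  case (Suc j)
  have D0: "D 0 = 0" using add[of 0 0] by simp
  have Dsum: "D (\<Sum>i\<in>A. g i) = (\<Sum>i\<in>A. D (g i))" if "finite A" for A :: "nat set" and g
    using that by (induction A rule: finite_induct) (simp_all add: add D0)
  have "(D^^Suc j) (T 0 0) = D (\<Sum>l\<le>j. of_nat (j choose l) * T l (j - l))"
    using Suc by simp
  also have "\<dots> = (\<Sum>l\<le>j. of_nat (j choose l) * T (Suc l) (j - l))
                  + (\<Sum>l\<le>j. of_nat (j choose l) * T l (Suc (j - l)))"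
    by (simp add: Dsum nat T algebra_simps sum.distrib)
  also have "(\<Sum>l\<le>j. of_nat (j choose l) * T l (Suc (j - l)))
      = T 0 (Suc j) + (\<Sum>l<j. of_nat (j choose Suc l) * T (Suc l) (j - l))"
  proof -
    have "(\<Sum>l\<le>j. of_nat (j choose l) * T l (Suc (j - l)))
        = (\<Sum>l<Suc j. of_nat (j choose l) * T l (Suc (j - l)))"
      by (simp add: lessThan_Suc_atMost)
    also have "\<dots> = T 0 (Suc j) + (\<Sum>l<j. of_nat (j choose Suc l) * T (Suc l) (Suc (j - Suc l)))"
      by (subst sum.lessThan_Suc_shift) simp
    also have "(\<Sum>l<j. of_nat (j choose Suc l) * T (Suc l) (Suc (j - Suc l)))
        = (\<Sum>l<j. of_nat (j choose Suc l) * T (Suc l) (j - l))"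
      by (intro sum.cong) (auto simp: Suc_diff_Suc)
    finally show ?thesis .
  qed
  also have "(\<Sum>l<j. of_nat (j choose Suc l) * T (Suc l) (j - l))
      = (\<Sum>l\<le>j. of_nat (j choose Suc l) * T (Suc l) (j - l))"
    by (simp add: lessThan_Suc_atMost[symmetric] binomial_eq_0)
  finally have "(D^^Suc j) (T 0 0) = T 0 (Suc j) +
      (\<Sum>l\<le>j. of_nat (Suc j choose Suc l) * T (Suc l) (j - l))"
    by (simp add: sum.distrib algebra_simps)
  also have "\<dots> = (\<Sum>l\<le>Suc j. of_nat (Suc j choose l) * T l (Suc j - l))"
    by (subst sum.atMost_Suc_shift) simp
  finally show ?case .
qed

lemma of_nat_pp_mult: "(of_nat n :: 'a::field poly poly) * p = smult (of_nat n) p"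
  by (simp add: of_nat_poly)

lemma Dop_leibniz:
  "(Dop^^j) (smult s f) = (\<Sum>l\<le>j. smult (smult (of_nat (j choose l)) ((pderiv^^l) s)) ((Dop^^(j - l)) f))"
proof -
  let ?T = "\<lambda>l m. smult ((pderiv^^l) s) ((Dop^^m) f)"
  have "(Dop^^j) (?T 0 0) = (\<Sum>l\<le>j. of_nat (j choose l) * ?T l (j - l))"
    by (rule leibniz_abstract) (simp_all add: Dop_add Dop_of_nat_mult Dop_smult)
  then show ?thesis by (simp add: of_nat_pp_mult of_nat_poly)
qed

lemma funpow_comp_apply: "(f^^a) ((f^^b) x) = (f^^(a+b)) x"
  by (simp add: funpow_add)

definition act :: "'a::field poly poly \<Rightarrow> 'a poly poly \<Rightarrow> 'a poly poly" where
  "act P f = (\<Sum>j\<le>degree P. smult (coeff P j) ((Dop^^j) f))"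

lemma sum_deg_bound:
  assumes "\<And>j. g 0 j = 0" "degree P \<le> N"
  shows "(\<Sum>j\<le>degree P. g (coeff P j) j) = (\<Sum>j\<le>N. g (coeff P j) j)"
  by (rule sum.mono_neutral_left) (use assms in \<open>auto simp: coeff_eq_0\<close>)

lemma act_bound: "degree P \<le> N \<Longrightarrow> act P f = (\<Sum>j\<le>N. smult (coeff P j) ((Dop^^j) f))"
  unfolding act_def by (rule sum_deg_bound) auto

lemma act_0[simp]: "act 0 f = 0"
  by (simp add: act_def)

lemma act_pCons: "act (pCons a P) f = smult a f + act P (Dop f)"
proof -
  have "act (pCons a P) f = (\<Sum>j\<le>Suc (degree P). smult (coeff (pCons a P) j) ((Dop^^j) f))"
    by (rule act_bound) (simp add: degree_pCons_le)
  also have "\<dots> = smult a f + (\<Sum>j\<le>degree P. smult (coeff P j) ((Dop^^j) (Dop f)))"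
    by (subst sum.atMost_Suc_shift) (simp add: funpow_Suc_right del: funpow.simps)
  finally show ?thesis by (simp add: act_def)
qed

lemma act_add_left: "act (P + Q) f = act P f + act Q f"
proof -
  let ?N = "max (degree P) (degree Q)"
  have "act (P + Q) f = (\<Sum>j\<le>?N. smult (coeff (P + Q) j) ((Dop^^j) f))"
    by (rule act_bound) (simp add: degree_add_le)
  also have "\<dots> = (\<Sum>j\<le>?N. smult (coeff P j) ((Dop^^j) f)) + (\<Sum>j\<le>?N. smult (coeff Q j) ((Dop^^j) f))"
    by (simp add: smult_add_left sum.distrib)
  also have "\<dots> = act P f + act Q f"
    by (simp add: act_bound[of P ?N] act_bound[of Q ?N])
  finally show ?thesis .
qed

lemma act_sum_left: "act (\<Sum>i\<in>A. P i) f = (\<Sum>i\<in>A. act (P i) f)"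
  by (induction A rule: infinite_finite_induct) (auto simp: act_add_left)

lemma act_monom: "act (monom q m) f = smult q ((Dop^^m) f)"
proof -
  have "act (monom q m) f = (\<Sum>j\<le>m. smult (coeff (monom q m) j) ((Dop^^j) f))"
    by (rule act_bound) (simp add: degree_monom_le)
  also have "\<dots> = (\<Sum>j\<in>{m}. smult (coeff (monom q m) j) ((Dop^^j) f))"
    by (rule sum.mono_neutral_right) auto
  also have "\<dots> = smult q ((Dop^^m) f)"
    by simp
  finally show ?thesis .
qed

lemma act_add_right: "act P (f + g) = act P f + act P g"
  by (simp add: act_def funpow_Dop_add smult_add_right sum.distrib)

lemma act_zero_right[simp]: "act P 0 = 0"
  by (simp add: act_def)

lemma act_sum_right: "act P (\<Sum>i\<in>A. f i) = (\<Sum>i\<in>A. act P (f i))"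
  by (induction A rule: infinite_finite_induct) (auto simp: act_add_right)

lemma smult_sum_right: "smult a (\<Sum>i\<in>A. f i) = (\<Sum>i\<in>A. smult a (f i))"
  by (induction A rule: infinite_finite_induct) (auto simp: smult_add_right)

lemma weyl_mult_act: "act (weyl_mult P Q) f = act P (act Q f)"
proof -
  have "act (weyl_mult P Q) f =
     (\<Sum>j\<le>degree P. \<Sum>k\<le>degree Q. \<Sum>l\<le>j.
        smult (coeff P j * smult (of_nat (j choose l)) ((pderiv ^^ l) (coeff Q k))) ((Dop^^(j - l + k)) f))"
    by (simp add: weyl_mult_def act_sum_left act_monom)
  also have "\<dots> = (\<Sum>k\<le>degree Q. \<Sum>j\<le>degree P. \<Sum>l\<le>j.
        smult (coeff P j * smult (of_nat (j choose l)) ((pderiv ^^ l) (coeff Q k))) ((Dop^^(j - l + k)) f))"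
    by (rule sum.swap)
  also have "\<dots> = (\<Sum>k\<le>degree Q. \<Sum>j\<le>degree P. \<Sum>l\<le>j.
        smult (coeff P j * smult (of_nat (j choose l)) ((pderiv ^^ l) (coeff Q k))) ((Dop^^(j - l)) ((Dop^^k) f)))"
    by (intro sum.cong refl) (simp add: funpow_comp_apply)
  also have "\<dots> = (\<Sum>k\<le>degree Q. act P (smult (coeff Q k) ((Dop^^k) f)))"
    by (simp add: act_def Dop_leibniz smult_sum_right)
  also have "\<dots> = act P (act Q f)"
    by (simp add: act_def[of Q] act_sum_right)
  finally show ?thesis .
qed




lemma Dop_monom_const: "Dop (monom [:a:] n) = monom [:a:] (Suc n)"
  by (auto simp: poly_eq_iff coeff_Dop pderiv_pCons)

lemma funpow_Dop_monom: "(Dop^^j) (monom [:a:] n) = monom [:a:] (j + n)"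
  by (induction j) (simp_all add: Dop_monom_const)

lemma act_monom1: "act P (monom 1 n) = P * monom 1 n"
proof (induction P arbitrary: n)
  case (pCons a P)
  have "Dop (monom 1 n) = (monom 1 (Suc n) :: 'a poly poly)"
    using Dop_monom_const[of 1 n] by (simp add: one_pCons)
  then show ?case using pCons.IH[of "Suc n"]
    by (simp add: act_pCons smult_monom monom_Suc algebra_simps)
qed simp

lemma act_one: "act P 1 = P"
  using act_monom1[of P 0] by simp

lemma weyl_mult_eq_act: "weyl_mult P Q = act P Q"
  using weyl_mult_act[of P Q 1] by (simp add: act_one)

lemma act_1_left: "act 1 f = f"
  by (simp add: act_def)

lemma Dop_smult_const: "Dop (smult [:a:] f) = smult [:a:] (Dop f)"
  by (simp add: Dop_smult pderiv_pCons)

lemma funpow_Dop_smult_const: "(Dop^^j) (smult [:a:] f) = smult [:a:] ((Dop^^j) f)"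
  by (induction j) (simp_all add: Dop_smult_const)

lemma act_smult_const: "act P (smult [:a:] f) = smult [:a:] (act P f)"
  by (simp add: act_def funpow_Dop_smult_const smult_sum_right mult.commute)

lemma act_const_left: "act [:[:a:]:] f = smult [:a:] f"
  by (simp add: act_pCons)

lemma Dop_degree:
  assumes "f \<noteq> 0"
  shows "degree (Dop f) = Suc (degree f) \<and> lead_coeff (Dop f) = lead_coeff f"
proof -
  have d: "degree (map_poly pderiv f) < degree (pCons 0 f)"
  proof -
    have "degree (map_poly pderiv f) \<le> degree f"
      by (rule degree_le) (simp add: coeff_map_poly coeff_eq_0)
    then show ?thesis using assms by simp
  qed
  show ?thesis
    unfolding Dop_def using degree_add_eq_right[OF d] lead_coeff_add_le[OF d] assms by simp
qed

lemma Dop_nz: "f \<noteq> 0 \<Longrightarrow> Dop f \<noteq> 0"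
  using Dop_degree by (metis degree_0 nat.distinct(1))

lemma act_degree:
  assumes "P \<noteq> 0" "f \<noteq> 0"
  shows "degree (act P f) = degree P + degree f \<and> lead_coeff (act P f) = lead_coeff P * lead_coeff f"
  using assms
proof (induction P arbitrary: f)
  case (pCons a P)
  show ?case
  proof (cases "P = 0")
    case True
    then have "a \<noteq> 0" using pCons by simp
    then show ?thesis using True by (simp add: act_pCons lead_coeff_smult)
  next
    case False
    have Df: "Dop f \<noteq> 0" by (rule Dop_nz) fact
    from pCons.IH[OF False Df] Dop_degree[OF pCons.prems(2)]
    have IH: "degree (act P (Dop f)) = degree P + Suc (degree f)"
      "lead_coeff (act P (Dop f)) = lead_coeff P * lead_coeff f" by auto
    have lt: "degree (smult a f) < degree (act P (Dop f))"
      using IH by simp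
    have l: "lead_coeff (act (pCons a P) f) = lead_coeff (act P (Dop f))"
      by (simp only: act_pCons lead_coeff_add_le[OF lt])
    have d: "degree (act (pCons a P) f) = degree (act P (Dop f))"
      by (simp only: act_pCons degree_add_eq_right[OF lt])
    show ?thesis using False l d IH by simp
  qed
qed simp




typedef (overloaded) 'a weyl = "UNIV :: 'a::field poly poly set" by auto

setup_lifting type_definition_weyl

instantiation weyl :: (field) ring_1
begin
lift_definition zero_weyl :: "'a weyl" is 0 .
lift_definition one_weyl :: "'a weyl" is 1 .
lift_definition plus_weyl :: "'a weyl \<Rightarrow> 'a weyl \<Rightarrow> 'a weyl" is "(+)" .
lift_definition minus_weyl :: "'a weyl \<Rightarrow> 'a weyl \<Rightarrow> 'a weyl" is "(-)" .
lift_definition uminus_weyl :: "'a weyl \<Rightarrow> 'a weyl" is uminus .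
lift_definition times_weyl :: "'a weyl \<Rightarrow> 'a weyl \<Rightarrow> 'a weyl" is weyl_mult .
instance
proof
  fix a b c :: "'a weyl"
  show "a * b * c = a * (b * c)"
    by transfer (simp add: weyl_mult_eq_act weyl_mult_act[symmetric])
  show "(a + b) * c = a * c + b * c"
    by transfer (simp add: weyl_mult_eq_act act_add_left)
  show "a * (b + c) = a * b + a * c"
    by transfer (simp add: weyl_mult_eq_act act_add_right)
  show "1 * a = a"
    by transfer (simp add: weyl_mult_eq_act act_1_left)
  show "a * 1 = a"
    by transfer (simp add: weyl_mult_eq_act act_one)
  show "(0::'a weyl) \<noteq> 1"
    by transfer simp
qed (transfer; simp add: algebra_simps)+
end

lemma Rep_mult: "Rep_weyl (a * b) = weyl_mult (Rep_weyl a) (Rep_weyl b)"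
  by transfer simp
lemma Rep_add: "Rep_weyl (a + b) = Rep_weyl a + Rep_weyl b"
  by transfer simp
lemma Rep_0: "Rep_weyl 0 = 0" by transfer simp
lemma Rep_1: "Rep_weyl 1 = 1" by transfer simp
lemma Rep_diff: "Rep_weyl (a - b) = Rep_weyl a - Rep_weyl b"
  by transfer simp

definition W :: "'a::field poly \<Rightarrow> 'a weyl" where "W r = Abs_weyl [:r:]"
definition Yw :: "'a::field weyl" where "Yw = Abs_weyl weyl_y"
definition Xw :: "'a::field weyl" where "Xw = Abs_weyl weyl_x"

lemma Rep_W: "Rep_weyl (W r) = [:r:]"
  by (simp add: W_def Abs_weyl_inverse)

lemma W_mult: "W r * W s = W (r * s)"
  by (simp add: W_def times_weyl.abs_eq weyl_mult_eq_act act_pCons)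

lemma W_add: "W r + W s = W (r + s)"
  by (simp add: W_def plus_weyl.abs_eq)

lemma W_0[simp]: "W 0 = 0" by (simp add: W_def zero_weyl_def)
lemma W_1[simp]: "W 1 = 1" by (simp add: W_def one_weyl_def one_pCons)

lemma W_diff: "W r - W s = W (r - s)"
  by (simp add: W_def minus_weyl.abs_eq)

lemma W_const_left: "Rep_weyl (W [:a:] * P) = smult [:a:] (Rep_weyl P)"
  by (simp add: Rep_mult Rep_W weyl_mult_eq_act act_const_left)

lemma W_const_right: "Rep_weyl (P * W [:a:]) = smult [:a:] (Rep_weyl P)"
proof -
  have e: "[:[:a:]:] = smult [:a:] (1::'a poly poly)" by (simp add: one_pCons)
  have "act (Rep_weyl P) [:[:a:]:] = smult [:a:] (Rep_weyl P)"
    by (metis act_one act_smult_const e)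
  then show ?thesis
    by (simp add: Rep_mult Rep_W weyl_mult_eq_act)
qed

lemma W_const_comm: "W [:a:] * P = P * W [:a:]"
  by (metis Rep_weyl_inject W_const_left W_const_right)

lemma Y_W: "Yw * W r = W r * Yw + W (pderiv r)"
proof -
  have "Rep_weyl (Yw * W r) = Dop [:r:]"
    by (simp add: Rep_mult Rep_W Yw_def Abs_weyl_inverse weyl_y_def weyl_mult_eq_act act_pCons)
  moreover have "Rep_weyl (W r * Yw) = [:0, r:]"
  proof -
    have e: "[:0, 1:] = (monom 1 1 :: 'a poly poly)" by (simp add: monom_Suc one_pCons monom_0)
    have "act [:r:] [:0, 1:] = [:0, r:]"
      unfolding e act_monom1 by (simp add: monom_Suc monom_0)
    then show ?thesis
      by (simp add: Rep_mult Rep_W Yw_def Abs_weyl_inverse weyl_y_def weyl_mult_eq_act)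
  qed
  moreover have "Dop [:r:] = [:0, r:] + [:pderiv r:]"
    by (simp add: poly_eq_iff coeff_Dop coeff_pCons split: nat.split)
  ultimately show ?thesis
    by (metis Rep_W Rep_add Rep_weyl_inject)
qed




lemma weyl_nz: "(a::'a::field weyl) \<noteq> 0 \<longleftrightarrow> Rep_weyl a \<noteq> 0"
  by (metis Rep_0 Rep_weyl_inject)

lemma mult_degree:
  assumes "a \<noteq> 0" "b \<noteq> 0"
  shows "degree (Rep_weyl (a * b)) = degree (Rep_weyl a) + degree (Rep_weyl b)"
    "lead_coeff (Rep_weyl (a * b)) = lead_coeff (Rep_weyl a) * lead_coeff (Rep_weyl b)"
    "a * b \<noteq> 0"
proof -
  have *: "Rep_weyl a \<noteq> 0" "Rep_weyl b \<noteq> 0" using assms weyl_nz by auto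
  show "degree (Rep_weyl (a * b)) = degree (Rep_weyl a) + degree (Rep_weyl b)"
    "lead_coeff (Rep_weyl (a * b)) = lead_coeff (Rep_weyl a) * lead_coeff (Rep_weyl b)"
    unfolding Rep_mult weyl_mult_eq_act using act_degree[OF *] by blast+
  then have "lead_coeff (Rep_weyl (a * b)) \<noteq> 0" using * by simp
  then show "a * b \<noteq> 0" using weyl_nz by force
qed

lemma pow_degree:
  assumes "(Y::'a::field weyl) \<noteq> 0"
  shows "Y ^ n \<noteq> 0 \<and> degree (Rep_weyl (Y ^ n)) = n * degree (Rep_weyl Y)"
proof (induction n)
  case 0 then show ?case by (simp add: Rep_1)
next
  case (Suc n)
  then show ?case using mult_degree[of Y "Y^n"] assms by simp
qed

definition ev :: "'a::field weyl \<Rightarrow> 'a poly poly \<Rightarrow> 'a weyl" where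
  "ev Y R = (\<Sum>j\<le>degree R. W (coeff R j) * Y ^ j)"

lemma ev_bound: "degree R \<le> N \<Longrightarrow> ev Y R = (\<Sum>j\<le>N. W (coeff R j) * Y ^ j)"
  unfolding ev_def by (rule sum_deg_bound) auto

lemma ev_0[simp]: "ev Y 0 = 0" by (simp add: ev_def)

lemma ev_pCons: "ev Y (pCons a R) = W a + ev Y R * Y"
proof -
  have "ev Y (pCons a R) = (\<Sum>j\<le>Suc (degree R). W (coeff (pCons a R) j) * Y ^ j)"
    by (rule ev_bound) (simp add: degree_pCons_le)
  also have "\<dots> = W a + (\<Sum>j\<le>degree R. W (coeff R j) * Y ^ j) * Y"
    by (subst sum.atMost_Suc_shift) (simp add: sum_distrib_right power_Suc2 mult.assoc del: power_Suc)
  finally show ?thesis by (simp add: ev_def)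
qed

lemma ev_const: "ev Y [:a:] = W a"
  by (simp add: ev_pCons)

lemma ev_add: "ev Y (R + S) = ev Y R + ev Y S"
proof (induction R arbitrary: S)
  case (pCons a R)
  then show ?case
    by (cases S) (simp add: ev_pCons algebra_simps W_add[symmetric])
qed simp

lemma ev_uminus: "ev Y (- R) = - ev Y R"
  by (metis add_eq_0_iff ev_0 ev_add)

lemma ev_diff: "ev Y (R - S) = ev Y R - ev Y S"
  by (metis diff_conv_add_uminus ev_add ev_uminus)

lemma ev_sum: "ev Y (\<Sum>i\<in>A. R i) = (\<Sum>i\<in>A. ev Y (R i))"
  by (induction A rule: infinite_finite_induct) (auto simp: ev_add)

lemma ev_smult: "ev Y (smult r R) = W r * ev Y R"
proof (induction R)
  case (pCons a R)
  then show ?case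
    by (simp add: ev_pCons algebra_simps W_mult)
qed simp

definition commY :: "'a::field poly \<Rightarrow> 'a weyl \<Rightarrow> bool" where
  "commY h Y \<longleftrightarrow> (\<forall>r. Y * W r = W r * Y + W (h * pderiv r))"

definition mulY :: "'a::field poly \<Rightarrow> 'a poly poly \<Rightarrow> 'a poly poly" where
  "mulY h S = pCons 0 S + map_poly (\<lambda>s. h * pderiv s) S"

lemma mulY_pCons: "mulY h (pCons a S) = pCons (h * pderiv a) (mulY h S + [:a:])"
  by (simp add: poly_eq_iff mulY_def coeff_map_poly coeff_pCons split: nat.split)

lemma ev_mulY:
  assumes "commY h Y"
  shows "Y * ev Y S = ev Y (mulY h S)"
proof (induction S)
  case 0
  then show ?case by (simp add: mulY_def)
next
  case (pCons a S)
  have c: "Y * W a = W a * Y + W (h * pderiv a)" using assms commY_def by blast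
  have "Y * ev Y (pCons a S) = Y * W a + (Y * ev Y S) * Y"
    by (simp add: ev_pCons algebra_simps)
  also have "\<dots> = W (h * pderiv a) + (ev Y (mulY h S) + W a) * Y"
    using c pCons by (simp add: algebra_simps)
  also have "\<dots> = ev Y (mulY h (pCons a S))"
    by (simp add: mulY_pCons ev_pCons ev_add ev_const)
  finally show ?case .
qed

lemma ev_pow_mulY:
  assumes "commY h Y"
  shows "Y ^ n * ev Y S = ev Y ((mulY h ^^ n) S)"
proof (induction n)
  case 0 then show ?case by simp
next
  case (Suc n)
  have "Y ^ Suc n * ev Y S = Y * (Y ^ n * ev Y S)" by (simp add: mult.assoc)
  then show ?case using Suc ev_mulY[OF assms] by simp
qed

definition star :: "'a::field poly \<Rightarrow> 'a poly poly \<Rightarrow> 'a poly poly \<Rightarrow> 'a poly poly" where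
  "star h R S = (\<Sum>j\<le>degree R. smult (coeff R j) ((mulY h ^^ j) S))"

lemma ev_mult:
  assumes "commY h Y"
  shows "ev Y R * ev Y S = ev Y (star h R S)"
proof -
  have "ev Y R * ev Y S = (\<Sum>j\<le>degree R. W (coeff R j) * (Y ^ j * ev Y S))"
    by (simp add: ev_def[of Y R] sum_distrib_right mult.assoc)
  also have "\<dots> = ev Y (star h R S)"
    by (simp add: ev_pow_mulY[OF assms] star_def ev_sum ev_smult)
  finally show ?thesis .
qed

lemma ev_degree:
  assumes "degree (Rep_weyl Y) \<ge> 1" "R \<noteq> 0"
  shows "ev Y R \<noteq> 0 \<and> degree (Rep_weyl (ev Y R)) = degree R * degree (Rep_weyl Y)"
  using assms(2)
proof (induction R)
  case (pCons a R)
  have Y0: "Y \<noteq> 0" using assms(1) by (metis Rep_0 degree_0 not_one_le_zero)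
  show ?case
  proof (cases "R = 0")
    case True
    then have "a \<noteq> 0" using pCons by simp
    then show ?thesis using True by (simp add: ev_pCons weyl_nz Rep_W)
  next
    case False
    from pCons.IH[OF False] have IH: "ev Y R \<noteq> 0" "degree (Rep_weyl (ev Y R)) = degree R * degree (Rep_weyl Y)"
      by auto
    have m: "degree (Rep_weyl (ev Y R * Y)) = degree R * degree (Rep_weyl Y) + degree (Rep_weyl Y)"
      "ev Y R * Y \<noteq> 0"
      using mult_degree[OF IH(1) Y0] IH(2) by auto
    have lt: "degree (Rep_weyl (W a)) < degree (Rep_weyl (ev Y R * Y))"
      using m assms(1) by (simp add: Rep_W)
    have d: "degree (Rep_weyl (ev Y (pCons a R))) = degree R * degree (Rep_weyl Y) + degree (Rep_weyl Y)"
      by (simp only: ev_pCons Rep_add degree_add_eq_right[OF lt[unfolded Rep_add]] m)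
    then have "ev Y (pCons a R) \<noteq> 0" using assms(1)
      by (metis Rep_0 add_is_0 degree_0 not_one_le_zero)
    then show ?thesis using d False by simp
  qed
qed simp

lemma ev_inj:
  assumes "degree (Rep_weyl Y) \<ge> 1" "ev Y R = ev Y S"
  shows "R = S"
proof (rule ccontr)
  assume "R \<noteq> S"
  then have "R - S \<noteq> 0" by simp
  from ev_degree[OF assms(1) this] assms(2) show False by (simp add: ev_diff)
qed




lemma Abs_add: "Abs_weyl (a + b) = Abs_weyl a + Abs_weyl b"
  by (simp add: plus_weyl.abs_eq)
lemma Abs_mult: "Abs_weyl (weyl_mult a b) = Abs_weyl a * Abs_weyl b"
  by (simp add: times_weyl.abs_eq)

lemma Rep_Xw: "Rep_weyl Xw = weyl_x"
  by (simp add: Xw_def Abs_weyl_inverse)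
lemma Xw_W: "Xw = W [:0, 1:]"
  by (simp add: Xw_def W_def weyl_x_def)
lemma Rep_Yw: "Rep_weyl Yw = [:0, 1:]"
  by (simp add: Yw_def Abs_weyl_inverse weyl_y_def)

lemma W_pCons: "W (pCons b a) = W [:b:] + W a * Xw"
  by (simp add: Xw_W W_mult W_add)

lemma W_in_Ah: "Rep_weyl (W a) \<in> A_h h"
proof (induction a)
  case 0 then show ?case using A_h.const[of 0 h] by (simp add: Rep_W Rep_0)
next
  case (pCons b a)
  have "Rep_weyl (W [:b:]) \<in> A_h h" using A_h.const[of b h] by (simp add: Rep_W)
  then show ?case using pCons
    by (subst W_pCons) (simp only: Rep_add Rep_mult Rep_Xw, intro A_h.add A_h.mult A_h.gen_x)
qed

lemma ev_in_Ah:
  assumes "Rep_weyl Y \<in> A_h h"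
  shows "Rep_weyl (ev Y R) \<in> A_h h"
proof (induction R)
  case 0 then show ?case using W_in_Ah[of 0 h] by (simp add: Rep_0)
next
  case (pCons a R)
  show ?case
    by (simp only: ev_pCons Rep_add Rep_mult) (intro A_h.add A_h.mult W_in_Ah pCons assms)
qed

definition Yh :: "'a::field poly \<Rightarrow> 'a weyl" where "Yh h = Yw * W h"

lemma Rep_Yh: "Rep_weyl (Yh h) = weyl_yhat h"
  by (simp add: Yh_def weyl_yhat_def Rep_mult Rep_Yw Rep_W weyl_y_def)

lemma commY_Yh: "commY h (Yh h)"
  unfolding commY_def
proof
  fix r
  have "W r * Yh h = (Yw * W r - W (pderiv r)) * W h"
    using Y_W[of r] by (simp add: Yh_def mult.assoc algebra_simps)
  also have "\<dots> = W (r * h) * Yw + W (pderiv (r * h)) - W (pderiv r * h)"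
    using Y_W[of "r * h"] by (simp add: algebra_simps mult.assoc W_mult)
  finally have 1: "W r * Yh h = W (r * h) * Yw + W (pderiv (r * h)) - W (pderiv r * h)" .
  have 2: "Yh h * W r = W (h * r) * Yw + W (pderiv (h * r))"
    using Y_W[of "h * r"] by (simp add: Yh_def mult.assoc W_mult)
  have hr: "h * r = r * h" "pderiv r * h = h * pderiv r" by (simp_all add: mult.commute)
  show "Yh h * W r = W r * Yh h + W (h * pderiv r)"
    unfolding 1 2 hr by simp
qed

lemma comm_X_comm_W:
  assumes "C * Xw = Xw * C"
  shows "C * W r = W r * C"
proof (induction r)
  case 0 then show ?case by simp
next
  case (pCons a r)
  have "C * W (pCons a r) = C * W [:a:] + (C * W r) * Xw"
    by (simp add: W_pCons[of a r] algebra_simps mult.assoc)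
  also have "\<dots> = W [:a:] * C + W r * (C * Xw)"
    using pCons W_const_comm[of a C] by (simp add: mult.assoc)
  also have "\<dots> = W (pCons a r) * C"
    using assms by (simp add: W_pCons[of a r] algebra_simps mult.assoc)
  finally show ?case .
qed

lemma commY_add:
  assumes "commY h Y" "\<And>r. C * W r = W r * C"
  shows "commY h (Y + C)"
  using assms unfolding commY_def by (simp add: algebra_simps)

lemma Rep_W_Yw: "Rep_weyl (W r * Yw) = [:0, r:]"
proof -
  have e: "[:0, 1:] = (monom 1 1 :: 'a poly poly)" by (simp add: monom_Suc one_pCons monom_0)
  have "act [:r:] [:0, 1:] = [:0, r:]"
    unfolding e act_monom1 by (simp add: monom_Suc monom_0)
  then show ?thesis
    by (simp add: Rep_mult Rep_W Rep_Yw weyl_mult_eq_act)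
qed

lemma comm_X_degree:
  fixes C :: "'a::field weyl"
  assumes "C * Xw = Xw * C"
  shows "degree (Rep_weyl C) \<noteq> 1"
proof
  assume d: "degree (Rep_weyl C) = 1"
  define c0 where "c0 = coeff (Rep_weyl C) 0"
  define c1 where "c1 = coeff (Rep_weyl C) 1"
  have cc: "Rep_weyl C = [:c0, c1:]"
  proof (rule poly_eqI)
    fix n show "coeff (Rep_weyl C) n = coeff [:c0, c1:] n"
      using d by (cases n) (auto simp: c0_def c1_def coeff_pCons coeff_eq_0 split: nat.split)
  qed
  have c1: "c1 \<noteq> 0"
  proof
    assume "c1 = 0"
    then have "lead_coeff (Rep_weyl C) = 0" using d c1_def by simp
    then show False using d leading_coeff_0_iff[of "Rep_weyl C"] by simp
  qed
  have "Rep_weyl (W c0 + W c1 * Yw) = [:c0, c1:]"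
    by (simp add: Rep_add Rep_W Rep_W_Yw)
  then have CC: "C = W c0 + W c1 * Yw"
    using cc Rep_weyl_inject by metis
  have YX: "(Yw :: 'a weyl) * Xw = Xw * Yw + 1"
  proof -
    have "pderiv [:0, 1:] = (1 :: 'a poly)" by (simp add: pderiv_pCons)
    then show ?thesis using Y_W[of "[:0,1:]"] W_1 unfolding Xw_W by metis
  qed
  have cx0: "W c0 * Xw = Xw * W c0" and cx1: "W c1 * Xw = Xw * W c1"
    by (simp_all add: Xw_W W_mult mult.commute)
  have e1: "W c1 * Yw * Xw = Xw * W c1 * Yw + W c1"
  proof -
    have "W c1 * Yw * Xw = W c1 * (Yw * Xw)" by (rule mult.assoc)
    also have "\<dots> = W c1 * Xw * Yw + W c1" by (simp only: YX distrib_left mult.assoc mult_1_right)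
    finally show ?thesis by (simp only: cx1)
  qed
  have "C * Xw - Xw * C = W c1"
    unfolding CC distrib_right distrib_left e1 cx0 by (simp add: mult.assoc)
  then have "W c1 = 0" using assms by simp
  then show False using c1 by (metis Rep_0 Rep_W pCons_eq_0_iff)
qed




lemma Ah_rep:
  assumes "a \<in> A_h h"
  shows "\<exists>R. Abs_weyl a = ev (Yh h) R"
  using assms
proof (induction rule: A_h.induct)
  case (const a)
  have "Abs_weyl [:[:a:]:] = ev (Yh h) [:[:a:]:]" by (simp add: ev_const W_def)
  then show ?case by blast
next
  case gen_x
  have "Abs_weyl weyl_x = ev (Yh h) [:[:0, 1:]:]" by (simp add: ev_const Xw_W[symmetric] Xw_def)
  then show ?case by blast
next
  case gen_yhat
  have "Abs_weyl (weyl_yhat h) = ev (Yh h) [:0, 1:]"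
    by (simp add: ev_pCons Rep_Yh[symmetric] Rep_weyl_inverse)
  then show ?case by blast
next
  case (add a b)
  then obtain R S where "Abs_weyl a = ev (Yh h) R" "Abs_weyl b = ev (Yh h) S" by blast
  then have "Abs_weyl (a + b) = ev (Yh h) (R + S)" by (simp add: Abs_add ev_add)
  then show ?case by blast
next
  case (mult a b)
  then obtain R S where "Abs_weyl a = ev (Yh h) R" "Abs_weyl b = ev (Yh h) S" by blast
  then have "Abs_weyl (weyl_mult a b) = ev (Yh h) (star h R S)"
    by (simp add: Abs_mult ev_mult[OF commY_Yh])
  then show ?case by blast
qed

lemma degree_Yh:
  assumes "h \<noteq> 0"
  shows "degree (Rep_weyl (Yh h)) = 1"
proof -
  have "Yw \<noteq> (0 :: 'a weyl)" by (simp add: weyl_nz Rep_Yw)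
  moreover have "W h \<noteq> 0" using assms by (simp add: weyl_nz Rep_W)
  ultimately show ?thesis
    using mult_degree(1)[of Yw "W h"] by (simp add: Yh_def Rep_Yw Rep_W)
qed

definition kap :: "'a::field poly \<Rightarrow> 'a poly poly \<Rightarrow> 'a poly poly \<Rightarrow> 'a poly poly" where
  "kap h c a = Rep_weyl (ev (Yh h + Abs_weyl c) (THE R. Abs_weyl a = ev (Yh h) R))"

lemma kap_eq:
  assumes "h \<noteq> 0" "Abs_weyl a = ev (Yh h) R"
  shows "kap h c a = Rep_weyl (ev (Yh h + Abs_weyl c) R)"
proof -
  have "(THE R. Abs_weyl a = ev (Yh h) R) = R"
  proof (rule the_equality)
    fix S assume "Abs_weyl a = ev (Yh h) S"
    then show "S = R" using assms ev_inj[of "Yh h" S R] degree_Yh[OF assms(1)] by simp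
  qed (rule assms(2))
  then show ?thesis by (simp add: kap_def)
qed

lemma main_part:
  fixes h :: "'a::field poly" and c :: "'a poly poly"
  assumes h0: "h \<noteq> 0" and cA: "c \<in> A_h h"
    and cx: "weyl_mult c weyl_x = weyl_mult weyl_x c"
  shows "(\<exists>\<kappa>. is_alg_endo h \<kappa> \<and> inj_on \<kappa> (A_h h) \<and>
            \<kappa> (weyl_yhat h) = weyl_yhat h + c \<and>
            (\<forall>r\<in>weyl_polys. \<kappa> r = r))
       \<and> (c \<notin> weyl_polys \<longrightarrow>
            (\<forall>\<kappa>. is_alg_endo h \<kappa> \<and> \<kappa> (weyl_yhat h) = weyl_yhat h + c \<and>
                 (\<forall>r\<in>weyl_polys. \<kappa> r = r) \<longrightarrow> \<kappa> ` A_h h \<noteq> A_h h))"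
proof -
  define C where "C = Abs_weyl c"
  define Yc where "Yc = Yh h + C"
  have CX: "C * Xw = Xw * C"
    using cx by (simp add: C_def Xw_def Abs_mult[symmetric])
  have CW: "\<And>r. C * W r = W r * C" by (rule comm_X_comm_W[OF CX])
  have cYc: "commY h Yc" unfolding Yc_def by (rule commY_add[OF commY_Yh CW])
  have RepC: "Rep_weyl C = c" by (simp add: C_def Abs_weyl_inverse)
  have RepYc: "Rep_weyl Yc = weyl_yhat h + c" by (simp add: Yc_def Rep_add Rep_Yh RepC)
  have YcA: "Rep_weyl Yc \<in> A_h h" unfolding RepYc by (intro A_h.add A_h.gen_yhat cA)
  have dC: "degree c \<noteq> 1" using comm_X_degree[OF CX] RepC by simp
  have dYc: "degree (Rep_weyl Yc) = (if degree c = 0 then 1 else degree c)"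
  proof (cases "degree c = 0")
    case True
    then have "degree (Rep_weyl C) < degree (Rep_weyl (Yh h))" using degree_Yh[OF h0] RepC by simp
    then show ?thesis using True degree_Yh[OF h0] unfolding Yc_def Rep_add
      by (simp add: degree_add_eq_left)
  next
    case False
    then have "degree (Rep_weyl (Yh h)) < degree (Rep_weyl C)" using degree_Yh[OF h0] RepC dC by simp
    then show ?thesis using False RepC unfolding Yc_def Rep_add
      by (simp add: degree_add_eq_right)
  qed
  have dYc1: "degree (Rep_weyl Yc) \<ge> 1" using dYc by simp
  have kapE: "\<And>a R. Abs_weyl a = ev (Yh h) R \<Longrightarrow> kap h c a = Rep_weyl (ev Yc R)"
    using kap_eq[OF h0] by (simp add: Yc_def C_def)
  have repE: "\<And>a. a \<in> A_h h \<Longrightarrow> \<exists>R. Abs_weyl a = ev (Yh h) R" by (rule Ah_rep)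
  have WA: "\<And>q. [:q:] \<in> A_h h" using W_in_Ah by (metis Rep_W)
  have smA: "\<And>s a. a \<in> A_h h \<Longrightarrow> smult [:s:] a \<in> A_h h"
  proof -
    fix s :: 'a and a assume "a \<in> A_h h"
    have "smult [:s:] a = weyl_mult [:[:s:]:] a"
      using W_const_left[of s "Abs_weyl a"] by (simp add: Rep_mult Rep_W Abs_weyl_inverse)
    then show "smult [:s:] a \<in> A_h h" using \<open>a \<in> A_h h\<close> A_h.mult[OF A_h.const] by simp
  qed
  have endo: "is_alg_endo h (kap h c)"
    unfolding is_alg_endo_def
  proof (intro conjI ballI allI)
    fix a assume "a \<in> A_h h"
    then obtain R where "Abs_weyl a = ev (Yh h) R" using repE by blast
    then show "kap h c a \<in> A_h h" using kapE ev_in_Ah[OF YcA] by simp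
  next
    have "Abs_weyl 1 = ev (Yh h) [:1:]" by (simp add: ev_const one_weyl_def)
    then have "kap h c 1 = Rep_weyl (ev Yc [:1:])" by (rule kapE)
    then show "kap h c 1 = 1" by (simp add: ev_const Rep_1)
  next
    fix a b assume "a \<in> A_h h" "b \<in> A_h h"
    then obtain R S where R: "Abs_weyl a = ev (Yh h) R" and S: "Abs_weyl b = ev (Yh h) S"
      using repE by blast
    have "Abs_weyl (a + b) = ev (Yh h) (R + S)" using R S by (simp add: Abs_add ev_add)
    then have "kap h c (a + b) = Rep_weyl (ev Yc (R + S))" by (rule kapE)
    then show "kap h c (a + b) = kap h c a + kap h c b"
      using kapE[OF R] kapE[OF S] kapE by (simp add: ev_add Rep_add)
    have "Abs_weyl (weyl_mult a b) = ev (Yh h) (star h R S)"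
      using R S by (simp add: Abs_mult ev_mult[OF commY_Yh])
    then have "kap h c (weyl_mult a b) = Rep_weyl (ev Yc (star h R S))" by (rule kapE)
    then show "kap h c (weyl_mult a b) = weyl_mult (kap h c a) (kap h c b)"
      using kapE[OF R] kapE[OF S] kapE by (simp add: ev_mult[OF cYc, symmetric] Rep_mult)
  next
    fix s :: 'a and a assume "a \<in> A_h h"
    then obtain R where R: "Abs_weyl a = ev (Yh h) R" using repE by blast
    have e: "\<And>P. Abs_weyl (smult [:s:] (Rep_weyl P)) = W [:s:] * P"
      using W_const_left by (metis Rep_weyl_inverse)
    have "Abs_weyl (smult [:s:] a) = ev (Yh h) (smult [:s:] R)"
      using e[of "Abs_weyl a", unfolded Abs_weyl_inverse[OF UNIV_I]] R by (simp add: ev_smult)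
    then have "kap h c (smult [:s:] a) = Rep_weyl (ev Yc (smult [:s:] R))" by (rule kapE)
    then show "kap h c (smult [:s:] a) = smult [:s:] (kap h c a)"
      using kapE[OF R] kapE W_const_left by (simp add: ev_smult)
  qed
  have inj: "inj_on (kap h c) (A_h h)"
  proof (rule inj_onI)
    fix a b assume "a \<in> A_h h" "b \<in> A_h h" "kap h c a = kap h c b"
    moreover obtain R S where R: "Abs_weyl a = ev (Yh h) R" and S: "Abs_weyl b = ev (Yh h) S"
      using repE \<open>a \<in> A_h h\<close> \<open>b \<in> A_h h\<close> by blast
    ultimately have "ev Yc R = ev Yc S" using kapE[OF R] kapE[OF S] by (simp add: Rep_weyl_inject)
    then have "R = S" using ev_inj dYc1 by blast
    then have "Abs_weyl a = Abs_weyl b" using R S by simp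
    then show "a = b" by (simp add: Abs_weyl_inject)
  qed
  have ky: "kap h c (weyl_yhat h) = weyl_yhat h + c"
  proof -
    have "Abs_weyl (weyl_yhat h) = ev (Yh h) [:0, 1:]"
      by (simp add: ev_pCons Rep_Yh[symmetric] Rep_weyl_inverse)
    then have "kap h c (weyl_yhat h) = Rep_weyl (ev Yc [:0, 1:])" by (rule kapE)
    then show ?thesis using RepYc by (simp add: ev_pCons)
  qed
  have kr: "\<forall>r\<in>weyl_polys. kap h c r = r"
  proof
    fix r :: "'a poly poly" assume "r \<in> weyl_polys"
    then obtain q :: "'a poly" where q: "r = [:q:]" by (auto simp: weyl_polys_def)
    have "Abs_weyl r = ev (Yh h) [:q:]" by (simp add: q ev_const W_def)
    then have "kap h c r = Rep_weyl (ev Yc [:q:])" by (rule kapE)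
    then show "kap h c r = r" by (simp add: ev_const Rep_W q)
  qed
  have part2: "c \<notin> weyl_polys \<longrightarrow>
            (\<forall>\<kappa>. is_alg_endo h \<kappa> \<and> \<kappa> (weyl_yhat h) = weyl_yhat h + c \<and>
                 (\<forall>r\<in>weyl_polys. \<kappa> r = r) \<longrightarrow> \<kappa> ` A_h h \<noteq> A_h h)"
  proof (intro impI allI)
    fix \<kappa>
    assume cp: "c \<notin> weyl_polys"
      and k: "is_alg_endo h \<kappa> \<and> \<kappa> (weyl_yhat h) = weyl_yhat h + c \<and> (\<forall>r\<in>weyl_polys. \<kappa> r = r)"
    have dc0: "degree c \<noteq> 0"
    proof
      assume "degree c = 0"
      then obtain q where "c = [:q:]" by (rule degree_eq_zeroE)
      then show False using cp by (auto simp: weyl_polys_def)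
    qed
    have dYc2: "degree (Rep_weyl Yc) \<ge> 2" using dYc dc0 dC by simp
    have kadd: "\<And>a b. a \<in> A_h h \<Longrightarrow> b \<in> A_h h \<Longrightarrow> \<kappa> (a + b) = \<kappa> a + \<kappa> b"
      and kmul: "\<And>a b. a \<in> A_h h \<Longrightarrow> b \<in> A_h h \<Longrightarrow> \<kappa> (weyl_mult a b) = weyl_mult (\<kappa> a) (\<kappa> b)"
      using k unfolding is_alg_endo_def by blast+
    have img: "\<And>a. a \<in> A_h h \<Longrightarrow> \<exists>R. Abs_weyl (\<kappa> a) = ev Yc R"
    proof -
      fix a assume "a \<in> A_h h"
      then show "\<exists>R. Abs_weyl (\<kappa> a) = ev Yc R"
      proof (induction rule: A_h.induct)
        case (const a)
        have "[:[:a:]:] \<in> weyl_polys" by (auto simp: weyl_polys_def)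
        then have "\<kappa> [:[:a:]:] = [:[:a:]:]" using k by blast
        then have "Abs_weyl (\<kappa> [:[:a:]:]) = ev Yc [:[:a:]:]" by (simp add: ev_const W_def)
        then show ?case by blast
      next
        case gen_x
        have "weyl_x \<in> weyl_polys" by (auto simp: weyl_polys_def weyl_x_def)
        then have "\<kappa> weyl_x = weyl_x" using k by blast
        then have "Abs_weyl (\<kappa> weyl_x) = ev Yc [:[:0, 1:]:]"
          by (simp add: ev_const Xw_W[symmetric] Xw_def)
        then show ?case by blast
      next
        case gen_yhat
        have "Abs_weyl (\<kappa> (weyl_yhat h)) = ev Yc [:0, 1:]"
          using k RepYc by (simp add: ev_pCons) (metis Rep_weyl_inverse)
        then show ?case by blast
      next
        case (add a b)
        then obtain R S where "Abs_weyl (\<kappa> a) = ev Yc R" "Abs_weyl (\<kappa> b) = ev Yc S" by blast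
        then have "Abs_weyl (\<kappa> (a + b)) = ev Yc (R + S)"
          using kadd[OF add.hyps(1,2)] by (simp add: Abs_add ev_add)
        then show ?case by blast
      next
        case (mult a b)
        then obtain R S where "Abs_weyl (\<kappa> a) = ev Yc R" "Abs_weyl (\<kappa> b) = ev Yc S" by blast
        then have "Abs_weyl (\<kappa> (weyl_mult a b)) = ev Yc (star h R S)"
          using kmul[OF mult.hyps(1,2)] by (simp add: Abs_mult ev_mult[OF cYc])
        then show ?case by blast
      qed
    qed
    show "\<kappa> ` A_h h \<noteq> A_h h"
    proof
      assume eq: "\<kappa> ` A_h h = A_h h"
      have "weyl_yhat h \<in> \<kappa> ` A_h h" using eq A_h.gen_yhat by simp
      then obtain a where a: "a \<in> A_h h" "weyl_yhat h = \<kappa> a" by blast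
      then obtain R where R: "Abs_weyl (weyl_yhat h) = ev Yc R" using img by metis
      then have YR: "Yh h = ev Yc R" by (metis Rep_Yh Rep_weyl_inverse)
      show False
      proof (cases "R = 0")
        case True
        then show False using YR degree_Yh[OF h0] by (simp add: Rep_0)
      next
        case False
        have "degree (Rep_weyl (Yh h)) = degree R * degree (Rep_weyl Yc)"
          using ev_degree[OF dYc1 False] YR by simp
        then have "1 = degree R * degree (Rep_weyl Yc)" using degree_Yh[OF h0] by simp
        then show False using dYc2 by (metis le_antisym nat_mult_eq_1_iff one_le_numeral numeral_le_one_iff semiring_norm(69))
      qed
    qed
  qed
  show ?thesis using endo inj ky kr part2 by blast
qed



theorem proposition8p15:
  fixes h :: "'a::field poly" and c :: "'a poly poly"
  assumes "CHAR('a) > 0"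
    and "degree h \<ge> 1"
    and "c \<in> centralizer_x h"
  shows "(\<exists>\<kappa>. is_alg_endo h \<kappa> \<and> inj_on \<kappa> (A_h h) \<and>
            \<kappa> (weyl_yhat h) = weyl_yhat h + c \<and>
            (\<forall>r\<in>weyl_polys. \<kappa> r = r))
       \<and> (c \<notin> weyl_polys \<longrightarrow>
            (\<forall>\<kappa>. is_alg_endo h \<kappa> \<and> \<kappa> (weyl_yhat h) = weyl_yhat h + c \<and>
                 (\<forall>r\<in>weyl_polys. \<kappa> r = r) \<longrightarrow> \<kappa> ` A_h h \<noteq> A_h h))"
proof -
  have h0: "h \<noteq> 0" using assms(2) by (metis degree_0 not_one_le_zero)
  have cA: "c \<in> A_h h" and cx: "weyl_mult c weyl_x = weyl_mult weyl_x c"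
    using assms(3) by (auto simp: centralizer_x_def)
  show ?thesis by (rule main_part[OF h0 cA cx])
qed

end
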